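(* Let $M$ be the monoid presented by $\langle a,b,c\mid ac=ca,\ bc=cb,\ cab=cbb\rangle$. The infinite rewriting system over $\{a,b,c\}$ with rules $ac\to ca$, $bc\to cb$, and $cuab\to cubb$ for every $u\in\{a,b\}^*$ (the case $u=\varepsilon$ being $cab\to cbb$) is a complete (noetherian and confluent) rewriting system presenting $M$, and its set of irreducible words is $\{a,b\}^*\cup c^+b^*a^*$. *)

theory Defs
  imports Main
begin

datatype gen = a | b | c

type_synonym word = "gen list"

definition rstep :: "(word \<times> word) set \<Rightarrow> (word \<times> word) set" where
  "rstep R = {(u @ l @ v, u @ r @ v) | u l r v. (l, r) \<in> R}"

definition thue_cong :: "(word \<times> word) set \<Rightarrow> (word \<times> word) set" where
  "thue_cong R = (rstep R \<union> (rstep R)\<inverse>)\<^sup>*"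

definition noetherian :: "(word \<times> word) set \<Rightarrow> bool" where
  "noetherian R \<longleftrightarrow> wf ((rstep R)\<inverse>)"

definition confluent :: "(word \<times> word) set \<Rightarrow> bool" where
  "confluent R \<longleftrightarrow> (\<forall>x y z. (x, y) \<in> (rstep R)\<^sup>* \<and> (x, z) \<in> (rstep R)\<^sup>* \<longrightarrow>
      (\<exists>w. (y, w) \<in> (rstep R)\<^sup>* \<and> (z, w) \<in> (rstep R)\<^sup>*))"

definition complete :: "(word \<times> word) set \<Rightarrow> bool" where
  "complete R \<longleftrightarrow> noetherian R \<and> confluent R"

definition irreducible :: "(word \<times> word) set \<Rightarrow> word set" where
  "irreducible R = {w. \<not> (\<exists>w'. (w, w') \<in> rstep R)}"

definition M_rels :: "(word \<times> word) set" where
  "M_rels = {([a, c], [c, a]), ([b, c], [c, b]), ([c, a, b], [c, b, b])}"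

definition S_rules :: "(word \<times> word) set" where
  "S_rules = {([a, c], [c, a]), ([b, c], [c, b])} \<union>
     {([c] @ u @ [a, b], [c] @ u @ [b, b]) | u. set u \<subseteq> {a, b}}"

end

theory Submission
  imports Defs
begin

fun rk :: "gen \<Rightarrow> nat" where "rk c = 0" | "rk b = 1" | "rk a = 2"

definition cnt :: "gen \<Rightarrow> word \<Rightarrow> nat" where "cnt x w = length (filter (\<lambda>y. y = x) w)"
definition ncc :: "word \<Rightarrow> nat" where "ncc w = length (filter (\<lambda>y. y \<noteq> c) w)"

fun invc :: "word \<Rightarrow> nat" where
  "invc [] = 0" | "invc (x#w) = (if x = c then 0 else cnt c w) + invc w"

lemma invc_app: "invc (p @ q) = invc p + invc q + ncc p * cnt c q"
  by (induction p) (auto simp: ncc_def cnt_def)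

definition ta :: "word \<Rightarrow> nat" where "ta w = length (takeWhile (\<lambda>x. x = a) (rev w))"

definition finv :: "word \<Rightarrow> nat \<times> word \<times> nat \<times> nat" where
  "finv w = (cnt c w, if cnt c w = 0 then w else [], length w, ta (filter (\<lambda>x. x \<noteq> c) w))"

lemma rstep_S_cases:
  assumes "(x,y) \<in> rstep S_rules"
  obtains u v where "x = u@[a,c]@v" "y = u@[c,a]@v"
  | u v where "x = u@[b,c]@v" "y = u@[c,b]@v"
  | u p v where "set p \<subseteq> {a,b}" "x = u@(c#p@[a,b])@v" "y = u@(c#p@[b,b])@v"
  using assms unfolding rstep_def S_rules_def by auto

lemma rstep_I: "(l,r) \<in> R \<Longrightarrow> (u@l@v, u@r@v) \<in> rstep R"
  unfolding rstep_def by blast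

lemma noeth: "noetherian S_rules"
proof -
  have "(rstep S_rules)\<inverse> \<subseteq> inv_image (less_than <*lex*> less_than) (\<lambda>w. (cnt a w, invc w))"
  proof
    fix q assume "q \<in> (rstep S_rules)\<inverse>"
    then obtain y x where q: "q = (y,x)" and xy: "(x,y) \<in> rstep S_rules" by auto
    from xy show "q \<in> inv_image (less_than <*lex*> less_than) (\<lambda>w. (cnt a w, invc w))"
      by (cases rule: rstep_S_cases) (simp_all add: q invc_app cnt_def ncc_def)
  qed
  then show ?thesis unfolding noetherian_def
    by (rule wf_subset[OF wf_inv_image[OF wf_lex_prod[OF wf_less_than wf_less_than]]])
qed

lemma finv_step: "(x,y) \<in> rstep S_rules \<Longrightarrow> finv x = finv y"
  by (cases rule: rstep_S_cases) (auto simp: finv_def cnt_def ta_def takeWhile_append)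

lemma finv_steps: "(x,y) \<in> (rstep S_rules)\<^sup>* \<Longrightarrow> finv x = finv y"
  by (induction rule: rtrancl_induct) (auto dest: finv_step)

lemma ab_sorted:
  assumes "set w \<subseteq> {a,b}" "\<not> (\<exists>p q. w = p@[a,b]@q)"
  shows "\<exists>j k. w = replicate j b @ replicate k a"
  using assms
proof (induction w)
  case Nil then show ?case by (metis append_Nil replicate_0)
next
  case (Cons y w)
  have "\<not> (\<exists>p q. w = p@[a,b]@q)"
  proof
    assume "\<exists>p q. w = p@[a,b]@q"
    then obtain p q where "w = p@[a,b]@q" by blast
    then have "y#w = (y#p)@[a,b]@q" by simp
    with Cons.prems show False by blast
  qed
  with Cons obtain j k where w: "w = replicate j b @ replicate k a" by auto
  show ?case
  proof (cases y)
    case a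
    show ?thesis
    proof (cases j)
      case 0 then show ?thesis using a w by (metis append_Nil replicate_0 replicate_Suc)
    next
      case (Suc j')
      then have "y#w = []@[a,b]@(replicate j' b @ replicate k a)" using a w by simp
      with Cons.prems show ?thesis by blast
    qed
  next
    case b then show ?thesis using w by (metis append_Cons replicate_Suc)
  next
    case c then show ?thesis using Cons.prems by auto
  qed
qed

lemma irr_sub:
  "w \<in> irreducible S_rules \<Longrightarrow> set w \<subseteq> {a,b} \<or> (\<exists>i j k. w = replicate i c @ replicate j b @ replicate k a \<and> i \<ge> 1)"
proof (induction w)
  case Nil then show ?case by simp
next
  case (Cons x w)
  have irr: "x#w \<noteq> u@l@v" if "(l,r) \<in> S_rules" for u l r v
  proof
    assume "x#w = u@l@v"
    moreover have "(u@l@v, u@r@v) \<in> rstep S_rules" using that by (rule rstep_I)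
    ultimately show False using Cons.prems unfolding irreducible_def by auto
  qed
  have "w \<in> irreducible S_rules"
  proof -
    { fix w' assume "(w,w') \<in> rstep S_rules"
      then obtain u l r v where "w = u@l@v" "(l,r) \<in> S_rules" unfolding rstep_def by blast
      with irr[of l r "x#u" v] have False by simp }
    then show ?thesis unfolding irreducible_def by blast
  qed
  with Cons.IH have IH: "set w \<subseteq> {a,b} \<or> (\<exists>i j k. w = replicate i c @ replicate j b @ replicate k a \<and> i \<ge> 1)" by blast
  show ?case
  proof (cases "x = c")
    case True
    show ?thesis
    proof (cases "set w \<subseteq> {a,b}")
      case T: True
      have "\<not> (\<exists>p q. w = p@[a,b]@q)"
      proof
        assume "\<exists>p q. w = p@[a,b]@q"
        then obtain p q where pq: "w = p@[a,b]@q" by blast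
        with T have "set p \<subseteq> {a,b}" by auto
        then have "([c]@p@[a,b], [c]@p@[b,b]) \<in> S_rules" unfolding S_rules_def
          by (intro UnI2 CollectI exI[of _ p]) simp
        with irr[of "[c]@p@[a,b]" "[c]@p@[b,b]" "[]" q] pq True show False by simp
      qed
      with T ab_sorted obtain j k where "w = replicate j b @ replicate k a" by blast
      then have "x#w = replicate 1 c @ replicate j b @ replicate k a" using True by simp
      then show ?thesis by blast
    next
      case False
      with IH obtain i j k where "w = replicate i c @ replicate j b @ replicate k a" "i \<ge> 1" by blast
      then have e: "x#w = replicate (Suc i) c @ replicate j b @ replicate k a" using True by simp
      have "1 \<le> Suc i" by simp
      with e show ?thesis by blast
    qed
  next
    case False
    show ?thesis
    proof (cases "set w \<subseteq> {a,b}")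
      case True then show ?thesis using False by (cases x) auto
    next
      case F: False
      with IH obtain i j k where w: "w = replicate i c @ replicate j b @ replicate k a" "i \<ge> 1" by blast
      then obtain w' where w': "w = c # w'" by (cases i) auto
      have "([x,c],[c,x]) \<in> S_rules" using False by (cases x) (auto simp: S_rules_def)
      with irr[of "[x,c]" "[c,x]" "[]" w'] w' show ?thesis by simp
    qed
  qed
qed

lemma sorted_no_redex:
  assumes "sorted (map rk w)" "c \<in> set w" shows "w \<in> irreducible S_rules"
proof -
  { fix w' assume "(w,w') \<in> rstep S_rules"
    then have False
      by (cases rule: rstep_S_cases) (use assms in \<open>auto simp: sorted_append\<close>) }
  then show ?thesis unfolding irreducible_def by blast
qed

lemma irr_eq: "irreducible S_rules =
      {w. set w \<subseteq> {a, b}} \<union>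
      {replicate i c @ replicate j b @ replicate k a | i j k. i \<ge> 1}" (is "?L = ?R")
proof
  show "?L \<subseteq> ?R" using irr_sub by blast
next
  show "?R \<subseteq> ?L"
  proof
    fix w assume "w \<in> {w. set w \<subseteq> {a, b}} \<union> {replicate i c @ replicate j b @ replicate k a | i j k. i \<ge> 1}"
    then consider "set w \<subseteq> {a,b}" | i j k where "w = replicate i c @ replicate j b @ replicate k a" "i \<ge> 1" by blast
    then show "w \<in> irreducible S_rules"
    proof cases
      case 1
      { fix w' assume "(w,w') \<in> rstep S_rules"
        then have False by (cases rule: rstep_S_cases) (use 1 in auto) }
      then show ?thesis unfolding irreducible_def by blast
    next
      case 2
      show ?thesis by (rule sorted_no_redex) (use 2 in \<open>auto simp: sorted_append\<close>)
    qed
  qed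
qed

lemma nf_exists:
  assumes "wf ((rstep R)\<inverse>)"
  shows "\<exists>y. (x,y) \<in> (rstep R)\<^sup>* \<and> y \<in> irreducible R"
  using assms
proof (induction x rule: wf_induct_rule)
  case (less x)
  show ?case
  proof (cases "x \<in> irreducible R")
    case True then show ?thesis by auto
  next
    case False
    then obtain x' where x': "(x,x') \<in> rstep R" by (auto simp: irreducible_def)
    then obtain y where "(x',y) \<in> (rstep R)\<^sup>*" "y \<in> irreducible R" using less by auto
    then show ?thesis using x' by (meson converse_rtrancl_into_rtrancl)
  qed
qed

lemma finv_inj:
  assumes "x \<in> irreducible S_rules" "y \<in> irreducible S_rules" "finv x = finv y"
  shows "x = y"
proof -
  have ta: "ta (replicate j b @ replicate k a) = k" for j k
    by (cases j) (auto simp: ta_def takeWhile_append)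
  have fr: "filter (\<lambda>x. x \<noteq> c) (replicate i c @ replicate j b @ replicate k a) = replicate j b @ replicate k a" for i j k
    by (induction i) (auto simp: filter_replicate)
  have cc: "cnt c (replicate i c @ replicate j b @ replicate k a) = i" for i j k
    by (auto simp: cnt_def filter_replicate)
  have c0: "set w \<subseteq> {a,b} \<Longrightarrow> cnt c w = 0" for w
    by (auto simp: cnt_def filter_empty_conv)
  show ?thesis
  proof (cases "cnt c x = 0")
    case True
    with assms(3) show ?thesis by (auto simp: finv_def)
  next
    case False
    with assms(3) have F2: "cnt c y \<noteq> 0" by (auto simp: finv_def)
    have "x \<in> {replicate i c @ replicate j b @ replicate k a | i j k. i \<ge> 1}"
      using assms(1) c0[of x] False unfolding irr_eq by blast
    then obtain i j k where x: "x = replicate i c @ replicate j b @ replicate k a" by blast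
    have "y \<in> {replicate i c @ replicate j b @ replicate k a | i j k. i \<ge> 1}"
      using assms(2) c0[of y] F2 unfolding irr_eq by blast
    then obtain i' j' k' where y: "y = replicate i' c @ replicate j' b @ replicate k' a" by blast
    from assms(3) have "i = i'" "i+j+k = i'+j'+k'" "k = k'"
      unfolding x y finv_def cc fr ta by auto
    then show ?thesis using x y by simp
  qed
qed

lemma confl: "confluent S_rules"
  unfolding confluent_def
proof (intro allI impI)
  fix x y z assume H: "(x, y) \<in> (rstep S_rules)\<^sup>* \<and> (x, z) \<in> (rstep S_rules)\<^sup>*"
  have wf: "wf ((rstep S_rules)\<inverse>)" using noeth noetherian_def by blast
  obtain y' where y': "(y,y') \<in> (rstep S_rules)\<^sup>*" "y' \<in> irreducible S_rules" using nf_exists[OF wf] by blast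
  obtain z' where z': "(z,z') \<in> (rstep S_rules)\<^sup>*" "z' \<in> irreducible S_rules" using nf_exists[OF wf] by blast
  have 1: "finv x = finv y'" using finv_steps[OF rtrancl_trans[OF conjunct1[OF H] y'(1)]] .
  have 2: "finv x = finv z'" using finv_steps[OF rtrancl_trans[OF conjunct2[OF H] z'(1)]] .
  have "y' = z'" using finv_inj[OF y'(2) z'(2)] 1 2 by simp
  then show "\<exists>w. (y, w) \<in> (rstep S_rules)\<^sup>* \<and> (z, w) \<in> (rstep S_rules)\<^sup>*" using y' z' by blast
qed

lemma rstep_ctx: "(x,y) \<in> rstep R \<Longrightarrow> (p@x@q, p@y@q) \<in> rstep R"
  unfolding rstep_def by auto (metis append.assoc)

lemma thue_ctx: "(x,y) \<in> thue_cong R \<Longrightarrow> (p@x@q, p@y@q) \<in> thue_cong R"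
  unfolding thue_cong_def
proof (induction rule: rtrancl_induct)
  case base then show ?case by simp
next
  case (step y z)
  then have "(p@y@q, p@z@q) \<in> rstep R \<union> (rstep R)\<inverse>" using rstep_ctx by blast
  with step.IH show ?case by (meson rtrancl.rtrancl_into_rtrancl)
qed

lemma thue_sym: "(x,y) \<in> thue_cong R \<Longrightarrow> (y,x) \<in> thue_cong R"
  unfolding thue_cong_def
  by (metis converse_Un converse_converse converse_iff rtrancl_converse sup_commute)

lemma thue_trans: "(x,y) \<in> thue_cong R \<Longrightarrow> (y,z) \<in> thue_cong R \<Longrightarrow> (x,z) \<in> thue_cong R"
  unfolding thue_cong_def by (meson rtrancl_trans)

lemma thue_step: "(x,y) \<in> rstep R \<Longrightarrow> (x,y) \<in> thue_cong R"
  unfolding thue_cong_def by auto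

lemma commute: "set u \<subseteq> {a,b} \<Longrightarrow> (c#u, u@[c]) \<in> thue_cong M_rels"
proof (induction u)
  case Nil then show ?case unfolding thue_cong_def by simp
next
  case (Cons x u)
  have "([x,c],[c,x]) \<in> M_rels" using Cons.prems unfolding M_rels_def by (cases x) auto
  then have "([]@[x,c]@u, []@[c,x]@u) \<in> rstep M_rels" by (rule rstep_I)
  then have 1: "(c#x#u, x#c#u) \<in> thue_cong M_rels" using thue_step thue_sym by fastforce
  have "([x]@(c#u)@[], [x]@(u@[c])@[]) \<in> thue_cong M_rels" using Cons by (intro thue_ctx) auto
  then show ?case using 1 thue_trans by fastforce
qed

lemma thue_eq: "thue_cong S_rules = thue_cong M_rels"
proof
  have MS: "M_rels \<subseteq> S_rules"
  proof
    fix q assume "q \<in> M_rels"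
    then consider "q = ([a, c], [c, a])" | "q = ([b, c], [c, b])" | "q = ([c]@[]@[a, b], [c]@[]@[b, b])"
      unfolding M_rels_def by auto
    then show "q \<in> S_rules"
    proof cases
      case 3
      have "([c]@[]@[a, b], [c]@[]@[b, b]) \<in> S_rules" unfolding S_rules_def
        by (intro UnI2 CollectI exI[of _ "[]"]) simp
      then show ?thesis using 3 by simp
    qed (auto simp: S_rules_def)
  qed
  have "rstep M_rels \<subseteq> rstep S_rules"
  proof
    fix q assume "q \<in> rstep M_rels"
    then obtain u l r v where "q = (u@l@v, u@r@v)" "(l,r) \<in> M_rels" unfolding rstep_def by blast
    then show "q \<in> rstep S_rules" using MS rstep_I[of l r S_rules u v] by auto
  qed
  then have "rstep M_rels \<union> (rstep M_rels)\<inverse> \<subseteq> rstep S_rules \<union> (rstep S_rules)\<inverse>" by auto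
  then show "thue_cong M_rels \<subseteq> thue_cong S_rules" unfolding thue_cong_def
    by (rule rtrancl_mono)
next
  have st: "(x,y) \<in> thue_cong M_rels" if "(x,y) \<in> rstep S_rules" for x y
    using that
  proof (cases rule: rstep_S_cases)
    case (1 u v)
    have "([a,c],[c,a]) \<in> M_rels" unfolding M_rels_def by auto
    then have "(u@[a,c]@v, u@[c,a]@v) \<in> rstep M_rels" by (rule rstep_I)
    then show ?thesis using 1 thue_step by simp
  next
    case (2 u v)
    have "([b,c],[c,b]) \<in> M_rels" unfolding M_rels_def by auto
    then have "(u@[b,c]@v, u@[c,b]@v) \<in> rstep M_rels" by (rule rstep_I)
    then show ?thesis using 2 thue_step by simp
  next
    case (3 u p v)
    have e1: "([]@(c#p)@[a,b], []@(p@[c])@[a,b]) \<in> thue_cong M_rels"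
      by (rule thue_ctx) (rule commute, rule 3(1))
    have "([c,a,b],[c,b,b]) \<in> M_rels" unfolding M_rels_def by auto
    then have "(p@[c,a,b]@[], p@[c,b,b]@[]) \<in> rstep M_rels" by (rule rstep_I)
    then have e2: "(p@[c,a,b], p@[c,b,b]) \<in> thue_cong M_rels" using thue_step by simp
    have e3: "([]@(c#p)@[b,b], []@(p@[c])@[b,b]) \<in> thue_cong M_rels"
      by (rule thue_ctx) (rule commute, rule 3(1))
    have e1': "(c#p@[a,b], p@[c,a,b]) \<in> thue_cong M_rels" using e1 by simp
    have e3': "(p@[c,b,b], c#p@[b,b]) \<in> thue_cong M_rels" using thue_sym[OF e3] by simp
    have "(c#p@[a,b], c#p@[b,b]) \<in> thue_cong M_rels"
      by (rule thue_trans[OF thue_trans[OF e1' e2] e3'])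
    then have "(u@(c#p@[a,b])@v, u@(c#p@[b,b])@v) \<in> thue_cong M_rels" by (rule thue_ctx)
    then show ?thesis using 3 by simp
  qed
  have "rstep S_rules \<union> (rstep S_rules)\<inverse> \<subseteq> (rstep M_rels \<union> (rstep M_rels)\<inverse>)\<^sup>*"
  proof
    fix q assume "q \<in> rstep S_rules \<union> (rstep S_rules)\<inverse>"
    then obtain x y where q: "q = (x,y)" and "(x,y) \<in> rstep S_rules \<or> (y,x) \<in> rstep S_rules" by (cases q) auto
    then have "(x,y) \<in> thue_cong M_rels" using st thue_sym by blast
    then show "q \<in> (rstep M_rels \<union> (rstep M_rels)\<inverse>)\<^sup>*" unfolding q thue_cong_def .
  qed
  then show "thue_cong S_rules \<subseteq> thue_cong M_rels" unfolding thue_cong_def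
    by (rule rtrancl_subset_rtrancl)
qed

theorem lemma3p10:
  shows "complete S_rules \<and> thue_cong S_rules = thue_cong M_rels \<and>
    irreducible S_rules =
      {w. set w \<subseteq> {a, b}} \<union>
      {replicate i c @ replicate j b @ replicate k a | i j k. i \<ge> 1}"
  using noeth confl thue_eq irr_eq unfolding complete_def by blast

end
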